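(* For all $n\ge 2$, $f_n=g_{n-1}-g_{n-2}$.
   Context: For $x\in S_n$, $\mathrm{ind}_x(a)$ is the position of the value $a$ in $x$, and $\mathrm{small}_{k}(x)$ is the subsequence of $x$ formed by the entries $1,\dots,k$. An occurrence of the bivincular pattern $123^{\star}$ in $x$ is a pair of indices $a<b<n$ with $x_a<x_b$ and $x_{b+1}=x_b+1$. Let $g_n=|\mathrm{Av}_n(132,123^{\star})|$ be the number of permutations in $S_n$ avoiding both the classical pattern $132$ and $123^{\star}$ (with $g_0=1$), and let $f_n$ be the number of $x\in S_n$ avoiding $132$ such that $\mathrm{ind}_x(n)-1=\mathrm{ind}_x(n-1)>1$ and $\mathrm{small}_{n-1}(x)$ avoids $123^{\star}$. *)

theory Defs
  imports Main
begin

text \<open>Permutations of [n] as lists (one-line notation); list index i (0-based)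
  corresponds to position i+1 of the paper.\<close>
definition perms :: "nat \<Rightarrow> nat list set" where
  "perms n = {x. distinct x \<and> set x = {1..n}}"

definition contains132 :: "nat list \<Rightarrow> bool" where
  "contains132 x \<longleftrightarrow> (\<exists>i j k. i < j \<and> j < k \<and> k < length x \<and>
       x!i < x!k \<and> x!k < x!j)"

definition avoids132 :: "nat list \<Rightarrow> bool" where
  "avoids132 x \<longleftrightarrow> \<not> contains132 x"

definition contains123star :: "nat list \<Rightarrow> bool" where
  "contains123star x \<longleftrightarrow> (\<exists>a b. a < b \<and> Suc b < length x \<and>
       x!a < x!b \<and> x!(Suc b) = x!b + 1)"

definition avoids123star :: "nat list \<Rightarrow> bool" where
  "avoids123star x \<longleftrightarrow> \<not> contains123star x"

definition ind :: "nat list \<Rightarrow> nat \<Rightarrow> nat" where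
  "ind x a = (LEAST i. i < length x \<and> x!i = a) + 1"

definition small :: "nat \<Rightarrow> nat list \<Rightarrow> nat list" where
  "small k x = filter (\<lambda>v. 1 \<le> v \<and> v \<le> k) x"

definition g :: "nat \<Rightarrow> nat" where
  "g n = card {x \<in> perms n. avoids132 x \<and> avoids123star x}"

definition f :: "nat \<Rightarrow> nat" where
  "f n = card {x \<in> perms n. avoids132 x \<and>
      ind x n - 1 = ind x (n - 1) \<and> ind x (n - 1) > 1 \<and>
      avoids123star (small (n - 1) x)}"

end

theory Submission
  imports Defs
begin

definition insv :: "nat \<Rightarrow> nat list \<Rightarrow> nat list" where
  "insv m y = concat (map (\<lambda>a. if a = m then [m, Suc m] else [a]) y)"

lemma insv_id: "m \<notin> set u \<Longrightarrow> insv m u = u"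
  by (induction u) (auto simp: insv_def)

lemma insv_split: "m \<notin> set u \<Longrightarrow> m \<notin> set v \<Longrightarrow> insv m (u @ m # v) = u @ m # Suc m # v"
  using insv_id[of m u] insv_id[of m v] by (simp add: insv_def)

lemma ind_nth: "distinct x \<Longrightarrow> i < length x \<Longrightarrow> ind x (x!i) = Suc i"
  unfolding ind_def
proof -
  assume d: "distinct x" and i: "i < length x"
  have "(LEAST j. j < length x \<and> x!j = x!i) = i"
    by (rule Least_equality) (use d i nth_eq_iff_index_eq in auto)
  then show "(LEAST j. j < length x \<and> x!j = x!i) + 1 = Suc i" by simp
qed

lemma finite_perms: "finite (perms n)"
proof -
  have "perms n \<subseteq> {xs. set xs \<subseteq> {1..n} \<and> length xs = n}"
    unfolding perms_def using distinct_card by fastforce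
  then show ?thesis using finite_lists_length_eq[of "{1..n}" n] finite_subset by blast
qed

lemma nx_le: "i \<le> length u \<Longrightarrow> (u @ m # Suc m # v)!i = (u @ m # v)!i"
  by (cases "i < length u") (auto simp: nth_append)

lemma nx_gt: "length u < i \<Longrightarrow> (u @ m # Suc m # v)!(Suc i) = (u @ m # v)!i"
  by (cases "i - length u") (auto simp: nth_append Suc_diff_le)

lemma K132:
  assumes d: "distinct (u @ m # Suc m # v)" and lu: "\<forall>w\<in>set u. w < m" and lv: "\<forall>w\<in>set v. w < m"
  shows "contains132 (u @ m # Suc m # v) \<longleftrightarrow> contains132 (u @ m # v)"
proof
  let ?x = "u @ m # Suc m # v" and ?y = "u @ m # v" and ?L = "length u"
  have xle: "\<And>t. t < length ?x \<Longrightarrow> ?x!t \<le> Suc m"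
  proof -
    fix t assume "t < length ?x"
    then have "?x!t \<in> set ?x" by (rule nth_mem)
    then show "?x!t \<le> Suc m" using lu lv by fastforce
  qed
  have xsm: "?x!(Suc ?L) = Suc m" by (simp add: nth_append)
  have xlt: "\<And>t. Suc ?L < t \<Longrightarrow> t < length ?x \<Longrightarrow> ?x!t < m"
  proof -
    fix t assume "Suc ?L < t" "t < length ?x"
    obtain s where ts: "t = Suc (Suc ?L + s)" using less_imp_Suc_add[OF \<open>Suc ?L < t\<close>] by blast
    have "s < length v" using ts \<open>t < length ?x\<close> by simp
    then show "?x!t < m" using lv ts by (simp add: nth_append)
  qed
  {
    assume "contains132 ?x"
    then obtain i j k where ijk: "i < j" "j < k" "k < length ?x" "?x!i < ?x!k" "?x!k < ?x!j"
      unfolding contains132_def by blast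
    show "contains132 ?y"
    proof (cases "j = Suc ?L")
      case True
      have "i \<noteq> ?L" using xlt[of k] ijk True by (auto simp: nth_append)
      then have "i < ?L" using ijk True by auto
      obtain k' where kk: "k = Suc k'" using ijk by (cases k) auto
      have k1: "?L < k - 1" using ijk True kk by auto
      have "?y!(k-1) = ?x!k" using nx_gt[of u "k - 1" m v] k1 kk by simp
      moreover have "?y!i = ?x!i" using nx_le[of i u m v] \<open>i < ?L\<close> by simp
      moreover have "?y!?L = m" by simp
      moreover have "?x!k < m" using xlt[of k] ijk True by simp
      moreover have "k - 1 < length ?y" using ijk by simp
      note F = calculation
      show ?thesis unfolding contains132_def
        by (rule exI[of _ i], rule exI[of _ ?L], rule exI[of _ "k - 1"])
          (use F \<open>i < ?L\<close> k1 ijk in auto)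
    next
      case False
      have "k \<noteq> Suc ?L" using xle[of j] ijk xsm by auto
      moreover have "i \<noteq> Suc ?L" using xle[of k] ijk xsm by auto
      ultimately have ne: "i \<noteq> Suc ?L" "j \<noteq> Suc ?L" "k \<noteq> Suc ?L" using False by auto
      define \<phi> where "\<phi> t = (if t \<le> ?L then t else t - 1)" for t
      have val: "?y!(\<phi> t) = ?x!t" if "t \<noteq> Suc ?L" for t
      proof (cases "t \<le> ?L")
        case True then show ?thesis using nx_le[of t u m v] by (simp add: \<phi>_def)
      next
        case False
        then obtain t' where tt: "t = Suc t'" by (cases t) auto
        then have "?L < t'" using that False by auto
        then show ?thesis using nx_gt[of u t' m v] False tt by (simp add: \<phi>_def)
      qed
      have mono: "\<phi> s < \<phi> t" if "s < t" "s \<noteq> Suc ?L" "t \<noteq> Suc ?L" for s t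
        using that by (auto simp: \<phi>_def)
      have len: "\<phi> k < length ?y" using ijk(3) ne by (auto simp: \<phi>_def)
      show ?thesis unfolding contains132_def
        by (rule exI[of _ "\<phi> i"], rule exI[of _ "\<phi> j"], rule exI[of _ "\<phi> k"])
          (use mono[of i j] mono[of j k] len val[of i] val[of j] val[of k] ijk ne in auto)
    qed
  }
  {
    assume "contains132 ?y"
    then obtain i j k where ijk: "i < j" "j < k" "k < length ?y" "?y!i < ?y!k" "?y!k < ?y!j"
      unfolding contains132_def by blast
    define \<psi> where "\<psi> t = (if t \<le> ?L then t else Suc t)" for t
    have val: "?x!(\<psi> t) = ?y!t" for t
      using nx_le[of t u m v] nx_gt[of u t m v] by (auto simp: \<psi>_def)
    have mono: "\<psi> s < \<psi> t" if "s < t" for s t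
      using that by (auto simp: \<psi>_def)
    have len: "\<psi> k < length ?x" using ijk(3) by (auto simp: \<psi>_def)
    show "contains132 ?x" unfolding contains132_def
      by (rule exI[of _ "\<psi> i"], rule exI[of _ "\<psi> j"], rule exI[of _ "\<psi> k"])
        (use mono[of i j] mono[of j k] len val[of i] val[of j] val[of k] ijk in auto)
  }
qed

lemma K132c:
  assumes lz: "\<forall>w\<in>set z. w < m"
  shows "contains132 (m # z) \<longleftrightarrow> contains132 z"
proof
  assume "contains132 (m # z)"
  then obtain i j k where ijk: "i < j" "j < k" "k < length (m # z)"
    "(m#z)!i < (m#z)!k" "(m#z)!k < (m#z)!j"
    unfolding contains132_def by blast
  obtain k' where k: "k = Suc k'" using ijk by (cases k) auto
  obtain j' where j: "j = Suc j'" using ijk by (cases j) auto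
  have "(m#z)!k < m" using k ijk lz by (simp add: nth_mem)
  have "i \<noteq> 0"
  proof
    assume "i = 0" then have "(m#z)!i = m" by simp
    with ijk(4) \<open>(m#z)!k < m\<close> show False by simp
  qed
  then obtain i' where i: "i = Suc i'" by (cases i) auto
  show "contains132 z" unfolding contains132_def
    by (rule exI[of _ i'], rule exI[of _ j'], rule exI[of _ k']) (use ijk i j k in auto)
next
  assume "contains132 z"
  then obtain i j k where ijk: "i < j" "j < k" "k < length z"
    "z!i < z!k" "z!k < z!j"
    unfolding contains132_def by blast
  show "contains132 (m # z)" unfolding contains132_def
    by (rule exI[of _ "Suc i"], rule exI[of _ "Suc j"], rule exI[of _ "Suc k"]) (use ijk in auto)
qed

lemma K123c:
  assumes lz: "\<forall>w\<in>set z. w < m"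
  shows "contains123star (m # z) \<longleftrightarrow> contains123star z"
proof
  assume "contains123star (m # z)"
  then obtain a b where ab: "a < b" "Suc b < length (m # z)"
    "(m#z)!a < (m#z)!b" "(m#z)!(Suc b) = (m#z)!b + 1"
    unfolding contains123star_def by blast
  obtain b' where b: "b = Suc b'" using ab by (cases b) auto
  have "(m#z)!b < m" using b ab lz by (simp add: nth_mem)
  have "a \<noteq> 0"
  proof
    assume "a = 0" then have "(m#z)!a = m" by simp
    with ab(3) \<open>(m#z)!b < m\<close> show False by simp
  qed
  then obtain a' where a: "a = Suc a'" by (cases a) auto
  show "contains123star z" unfolding contains123star_def
    by (rule exI[of _ a'], rule exI[of _ b']) (use ab a b in auto)
next
  assume "contains123star z"
  then obtain a b where ab: "a < b" "Suc b < length z"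
    "z!a < z!b" "z!(Suc b) = z!b + 1"
    unfolding contains123star_def by blast
  show "contains123star (m # z)" unfolding contains123star_def
    by (rule exI[of _ "Suc a"], rule exI[of _ "Suc b"]) (use ab in auto)
qed

lemma perm_range: "y \<in> perms m \<Longrightarrow> w \<in> set y \<Longrightarrow> 1 \<le> w \<and> w \<le> m"
  unfolding perms_def by auto

lemma split_perm:
  assumes y: "y \<in> perms m" and m1: "m \<ge> 1"
  obtains u v where "y = u @ m # v" "m \<notin> set u" "m \<notin> set v"
    "\<forall>w\<in>set u. 1 \<le> w \<and> w < m" "\<forall>w\<in>set v. 1 \<le> w \<and> w < m" "distinct (u @ m # v)"
proof -
  have "m \<in> set y" using y m1 unfolding perms_def by auto
  then obtain u v where uv: "y = u @ m # v" by (meson split_list)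
  have d: "distinct (u @ m # v)" using y uv unfolding perms_def by auto
  have r: "\<forall>w\<in>set u \<union> set v. 1 \<le> w \<and> w \<le> m" using perm_range[OF y] uv by auto
  have "m \<notin> set u" "m \<notin> set v" using d by auto
  moreover have "\<forall>w\<in>set u. 1 \<le> w \<and> w < m" "\<forall>w\<in>set v. 1 \<le> w \<and> w < m"
    using r calculation by (metis UnI1 le_neq_implies_less, metis UnI2 le_neq_implies_less)
  ultimately show ?thesis using that[OF uv] d by blast
qed

lemma take_two: "Suc j < length x \<Longrightarrow> x = take j x @ x!j # x!(Suc j) # drop (Suc (Suc j)) x"
  by (metis Cons_nth_drop_Suc Suc_lessD append_take_drop_id)

lemma small_eq:
  assumes "\<forall>w\<in>set u. 1 \<le> w \<and> w < m" "\<forall>w\<in>set v. 1 \<le> w \<and> w < m" "m \<ge> 1"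
  shows "small m (u @ m # Suc m # v) = u @ m # v"
proof -
  have "filter (\<lambda>w. 1 \<le> w \<and> w \<le> m) u = u" "filter (\<lambda>w. 1 \<le> w \<and> w \<le> m) v = v"
    using assms by (auto intro!: filter_True)
  then show ?thesis using assms(3) by (simp add: small_def)
qed

lemma rem_eq:
  assumes "\<forall>w\<in>set u. w < m" "\<forall>w\<in>set v. w < m"
  shows "removeAll (Suc m) (u @ m # Suc m # v) = u @ m # v"
proof -
  have "removeAll (Suc m) u = u" "removeAll (Suc m) v = v"
    using assms by (auto intro!: removeAll_id)
  then show ?thesis by simp
qed

lemma A_to_B:
  assumes x: "x \<in> perms (Suc m)" "avoids132 x" "ind x (Suc m) - 1 = ind x m" "ind x m > 1"
    "avoids123star (small m x)" and m1: "m \<ge> 1"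
  shows "removeAll (Suc m) x \<in> perms m \<and> avoids132 (removeAll (Suc m) x) \<and>
     avoids123star (removeAll (Suc m) x) \<and> hd (removeAll (Suc m) x) \<noteq> m \<and>
     insv m (removeAll (Suc m) x) = x"
proof -
  have d: "distinct x" and sx: "set x = {1..Suc m}" using x(1) unfolding perms_def by auto
  have "Suc m \<in> set x" "m \<in> set x" using sx m1 by auto
  then obtain i j where i: "i < length x" "x!i = Suc m" and j: "j < length x" "x!j = m"
    by (metis in_set_conv_nth)
  have "ind x (Suc m) = Suc i" "ind x m = Suc j" using ind_nth[OF d i(1)] ind_nth[OF d j(1)] i j by auto
  then have ij: "i = Suc j" "j \<ge> 1" using x(3,4) by auto
  define u where "u = take j x"
  define v where "v = drop (Suc (Suc j)) x"
  have xe: "x = u @ m # Suc m # v" using take_two[of j x] i j ij unfolding u_def v_def by simp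
  have un: "u \<noteq> []" using ij j unfolding u_def by (cases x) auto
  have d2: "distinct (u @ m # Suc m # v)" using d xe by simp
  have r0: "\<forall>w\<in>set x. 1 \<le> w \<and> w \<le> Suc m" using sx by auto
  have r: "\<forall>w\<in>set u \<union> set v. 1 \<le> w \<and> w \<le> Suc m" using r0 xe by simp
  have mu: "m \<notin> set u" "Suc m \<notin> set u" "m \<notin> set v" "Suc m \<notin> set v" using d2 by auto
  have lu: "\<forall>w\<in>set u. 1 \<le> w \<and> w < m" using r mu by (metis UnI1 le_SucE le_neq_implies_less)
  have lv: "\<forall>w\<in>set v. 1 \<le> w \<and> w < m" using r mu by (metis UnI2 le_SucE le_neq_implies_less)
  have re: "removeAll (Suc m) x = u @ m # v" using rem_eq[of u m v] lu lv xe by auto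
  have se: "small m x = u @ m # v" using small_eq[OF lu lv m1] xe by simp
  have p: "u @ m # v \<in> perms m"
  proof -
    have "set (u @ m # v) = set x - {Suc m}" using xe mu d2 by auto
    then show ?thesis using sx d2 unfolding perms_def by auto
  qed
  have lu': "\<forall>w\<in>set u. w < m" using lu by blast
  have lv': "\<forall>w\<in>set v. w < m" using lv by blast
  have "contains132 x = contains132 (u @ m # v)" using K132[OF d2 lu' lv'] xe by simp
  then have a: "avoids132 (u @ m # v)" using x(2) unfolding avoids132_def by simp
  have h: "hd (u @ m # v) \<noteq> m" using un mu by (cases u) auto
  have i: "insv m (u @ m # v) = x" using insv_split[OF mu(1) mu(3)] xe by simp
  have s: "avoids123star (u @ m # v)" using x(5) se by simp
  show ?thesis unfolding re using p a h i s by blast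
qed

lemma B_to_A:
  assumes y: "y \<in> perms m" "avoids132 y" "avoids123star y" "hd y \<noteq> m" and m1: "m \<ge> 1"
  shows "insv m y \<in> perms (Suc m) \<and> avoids132 (insv m y) \<and>
     ind (insv m y) (Suc m) - 1 = ind (insv m y) m \<and> ind (insv m y) m > 1 \<and>
     avoids123star (small m (insv m y)) \<and> removeAll (Suc m) (insv m y) = y"
proof -
  obtain u v where uv: "y = u @ m # v" "m \<notin> set u" "m \<notin> set v"
    "\<forall>w\<in>set u. 1 \<le> w \<and> w < m" "\<forall>w\<in>set v. 1 \<le> w \<and> w < m" "distinct (u @ m # v)"
    using split_perm[OF y(1) m1] by blast
  have un: "u \<noteq> []" using y(4) uv(1) by auto
  have xe: "insv m y = u @ m # Suc m # v" using insv_split uv by simp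
  have d2: "distinct (u @ m # Suc m # v)" using uv by auto
  have lu: "\<forall>w\<in>set u. w < m" "\<forall>w\<in>set v. w < m" using uv by auto
  have p: "u @ m # Suc m # v \<in> perms (Suc m)"
  proof -
    have "set (u @ m # Suc m # v) = insert (Suc m) (set y)" using uv by auto
    also have "\<dots> = {1..Suc m}" using y(1) unfolding perms_def by auto
    finally show ?thesis using d2 unfolding perms_def by auto
  qed
  have a: "avoids132 (u @ m # Suc m # v)" using y(2) K132[OF d2 lu] uv(1) unfolding avoids132_def by auto
  have i1: "ind (u @ m # Suc m # v) (Suc m) = Suc (Suc (length u))"
    using ind_nth[OF d2, of "Suc (length u)"] by (simp add: nth_append)
  have i2: "ind (u @ m # Suc m # v) m = Suc (length u)"
    using ind_nth[OF d2, of "length u"] by (simp add: nth_append)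
  have "length u \<ge> 1" using un by (cases u) auto
  then show ?thesis using xe p a i1 i2 small_eq[OF uv(4,5) m1] rem_eq[OF lu] y(3) uv(1) by auto
qed

theorem lemma3p19:
  fixes n :: nat
  assumes "n \<ge> 2"
  shows "int (f n) = int (g (n - 1)) - int (g (n - 2))"
proof -
  define m where "m = n - 1"
  have n: "n = Suc m" and m1: "m \<ge> 1" using assms unfolding m_def by auto
  define A where "A = {x \<in> perms (Suc m). avoids132 x \<and>
      ind x (Suc m) - 1 = ind x m \<and> ind x m > 1 \<and> avoids123star (small m x)}"
  define B where "B = {y \<in> perms m. avoids132 y \<and> avoids123star y}"
  define C where "C = {y \<in> B. hd y = m}"
  define D where "D = {z \<in> perms (m - 1). avoids132 z \<and> avoids123star z}"
  have fA: "f n = card A" unfolding f_def A_def n by simp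
  have gB: "g (n - 1) = card B" unfolding g_def B_def m_def ..
  have gD: "g (n - 2) = card D" unfolding g_def D_def m_def by (simp add: numeral_2_eq_2)
  have finB: "finite B" unfolding B_def using finite_perms by simp
  have CB: "C \<subseteq> B" unfolding C_def by auto
  have AC: "card A = card (B - C)"
  proof -
    have "bij_betw (removeAll (Suc m)) A (B - C)"
    proof (rule bij_betw_byWitness[where f' = "insv m"])
      show "\<forall>a\<in>A. insv m (removeAll (Suc m) a) = a"
      proof
        fix x assume "x \<in> A"
        then show "insv m (removeAll (Suc m) x) = x" using A_to_B[of x m] m1 unfolding A_def by auto
      qed
      show "\<forall>a'\<in>B - C. removeAll (Suc m) (insv m a') = a'"
      proof
        fix y assume "y \<in> B - C"
        then show "removeAll (Suc m) (insv m y) = y" using B_to_A[of y m] m1 unfolding B_def C_def by auto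
      qed
      show "removeAll (Suc m) ` A \<subseteq> B - C"
      proof
        fix y assume "y \<in> removeAll (Suc m) ` A"
        then obtain x where "x \<in> A" "y = removeAll (Suc m) x" by blast
        then show "y \<in> B - C" using A_to_B[of x m] m1 unfolding A_def B_def C_def by auto
      qed
      show "insv m ` (B - C) \<subseteq> A"
      proof
        fix x assume "x \<in> insv m ` (B - C)"
        then obtain y where "y \<in> B - C" "x = insv m y" by blast
        then show "x \<in> A" using B_to_A[of y m] m1 unfolding A_def B_def C_def by auto
      qed
    qed
    then show ?thesis by (rule bij_betw_same_card)
  qed
  have CD: "card C = card D"
  proof -
    have "bij_betw (\<lambda>z. m # z) D C"
    proof (rule bij_betw_byWitness[where f' = tl])
      show "\<forall>a\<in>D. tl (m # a) = a" by simp
      show "\<forall>a'\<in>C. m # tl a' = a'"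
      proof
        fix y assume "y \<in> C"
        then have "y \<noteq> []" "hd y = m" using m1 unfolding C_def B_def perms_def by auto
        then show "m # tl y = y" by (cases y) auto
      qed
      show "(\<lambda>z. m # z) ` D \<subseteq> C"
      proof
        fix y assume "y \<in> (\<lambda>z. m # z) ` D"
        then obtain z where z: "y = m # z" "z \<in> D" by blast
        have lz: "\<forall>w\<in>set z. w < m" using z(2) unfolding D_def perms_def by auto
        have "set (m # z) = {1..m}" using z(2) m1 unfolding D_def perms_def by auto
        moreover have "distinct (m # z)" using z(2) lz unfolding D_def perms_def by auto
        ultimately show "y \<in> C" using z K132c[OF lz] K123c[OF lz]
          unfolding C_def B_def D_def perms_def avoids132_def avoids123star_def by auto
      qed
      show "tl ` C \<subseteq> D"
      proof
        fix z assume "z \<in> tl ` C"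
        then obtain y where y: "z = tl y" "y \<in> C" by blast
        then have "y \<noteq> []" "hd y = m" using m1 unfolding C_def B_def perms_def by auto
        then have ye: "y = m # z" using y by (cases y) auto
        have dy: "distinct (m # z)" and sy: "set (m # z) = {1..m}"
          using y(2) ye unfolding C_def B_def perms_def by auto
        have mz: "m \<notin> set z" using dy by simp
        have sz: "set z = {1..m} - {m}" using sy mz by (metis Diff_insert_absorb list.simps(15))
        have e: "{1..m} - {m} = {1..m - 1}" by auto
        have lz: "\<forall>w\<in>set z. w < m" unfolding sz by auto
        have "set z = {1..m - 1}" using sz e by simp
        then show "z \<in> D" using y(2) ye dy K132c[OF lz] K123c[OF lz]
          unfolding C_def B_def D_def perms_def avoids132_def avoids123star_def by auto
      qed
    qed
    then show ?thesis by (rule bij_betw_same_card[symmetric])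
  qed
  have "card A = card B - card C" using AC card_Diff_subset[OF finite_subset[OF CB finB] CB] by simp
  moreover have "card C \<le> card B" using card_mono[OF finB CB] .
  ultimately show ?thesis using fA gB gD CD by simp
qed

end
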